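(* Let $\Sigma=[\sigma_{hk}]$ be a $p\times p$ Hermitian positive definite complex matrix, $\alpha=(n_1,m_1,\dots,n_p,m_p)\in\mathbb Z_{\ge0}^{2p}$, $N=\{h:n_h\neq0\}$, $M=\{k:m_k\neq0\}$, $S^N_h=\{k\in M:\sigma_{hk}\neq0\}$ for $h\in N$, and $S^M_k=\{h\in N:\sigma_{hk}\neq0\}$ for $k\in M$. The moment $\nu(\alpha)$ of $\mathcal{CN}_p(\Sigma)$ equals zero if one of the following holds: (1) there exists $h\in N$ with $S^N_h=\emptyset$, or there exists $k\in M$ with $S^M_k=\emptyset$; (2) all sets $S^N_h$, $h\in N$, are nonempty and, for the partition $\{M_1,\dots,M_q\}$ of $M$ induced by the $S^N_h$'s, there exists $r\in\{1,\dots,q\}$ with $\sum_{i\in N:\ S^N_i\subset M_r}n_i\neq\sum_{j\in M_r}m_j$.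
   Context: $\mathcal{CN}_p(\Sigma)$ has density $\varphi(z;\Sigma)=\frac{1}{\pi^p\det\Sigma}\exp(-z^*\Sigma^{-1}z)$ on $\mathbb C^p\cong\mathbb R^{2p}$, and $\nu(\alpha)=\int_{\mathbb C^p}\prod_{j=1}^p z_j^{n_j}\bar z_j^{m_j}\varphi(z;\Sigma)\,dz$. The partition of $M$ induced by the $S^N_h$ is the set of connected components of the graph with vertex set $M$ in which two vertices are adjacent iff both belong to the same $S^N_h$ for some $h\in N$. *)

theory Defs
  imports "HOL-Analysis.Analysis"
begin

definition herm_form :: "complex^'n^'n \<Rightarrow> complex^'n \<Rightarrow> complex" where
  "herm_form A z = (\<Sum>i\<in>UNIV. \<Sum>j\<in>UNIV. cnj (z$i) * A$i$j * z$j)"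

definition hermitian :: "complex^'n^'n \<Rightarrow> bool" where
  "hermitian A \<longleftrightarrow> (\<forall>i j. A$i$j = cnj (A$j$i))"

definition herm_pos_def :: "complex^'n^'n \<Rightarrow> bool" where
  "herm_pos_def A \<longleftrightarrow> hermitian A \<and> (\<forall>z. z \<noteq> 0 \<longrightarrow> Re (herm_form A z) > 0)"

text \<open>Density of CN_p(Sigma) on C^p (Lebesgue measure on C^p = R^(2p)).\<close>
definition cgauss_density :: "complex^'n^'n \<Rightarrow> complex^'n \<Rightarrow> complex" where
  "cgauss_density S z =
     exp (- herm_form (matrix_inv S) z) / (complex_of_real (pi ^ CARD('n)) * det S)"

text \<open>Moment nu(alpha), alpha = (n_1,m_1,...,n_p,m_p) given by the two functions nn, mm.\<close>
definition cgauss_moment :: "complex^'n^'n \<Rightarrow> ('n \<Rightarrow> nat) \<Rightarrow> ('n \<Rightarrow> nat) \<Rightarrow> complex" where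
  "cgauss_moment S nn mm =
     (LINT z|lborel. (\<Prod>j\<in>UNIV. (z$j) ^ nn j * (cnj (z$j)) ^ mm j) * cgauss_density S z)"

definition Nset :: "('n \<Rightarrow> nat) \<Rightarrow> 'n set" where "Nset nn = {h. nn h \<noteq> 0}"
definition Mset :: "('n \<Rightarrow> nat) \<Rightarrow> 'n set" where "Mset mm = {k. mm k \<noteq> 0}"

definition SN :: "complex^'n^'n \<Rightarrow> ('n \<Rightarrow> nat) \<Rightarrow> 'n \<Rightarrow> 'n set" where
  "SN S mm h = {k \<in> Mset mm. S$h$k \<noteq> 0}"

definition SM :: "complex^'n^'n \<Rightarrow> ('n \<Rightarrow> nat) \<Rightarrow> 'n \<Rightarrow> 'n set" where
  "SM S nn k = {h \<in> Nset nn. S$h$k \<noteq> 0}"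

definition M_adj :: "complex^'n^'n \<Rightarrow> ('n \<Rightarrow> nat) \<Rightarrow> ('n \<Rightarrow> nat) \<Rightarrow> ('n \<times> 'n) set" where
  "M_adj S nn mm = {(k, k'). \<exists>h \<in> Nset nn. k \<in> SN S mm h \<and> k' \<in> SN S mm h}"

text \<open>Blocks of the induced partition of M: connected components of the graph on M.\<close>
definition M_blocks :: "complex^'n^'n \<Rightarrow> ('n \<Rightarrow> nat) \<Rightarrow> ('n \<Rightarrow> nat) \<Rightarrow> 'n set set" where
  "M_blocks S nn mm =
     {{k' \<in> Mset mm. (k, k') \<in> (M_adj S nn mm)\<^sup>*} | k. k \<in> Mset mm}"

end

theory Submission
  imports Defs "HOL-Probability.Probability"
begin


definition feasible :: "complex^'n^'n \<Rightarrow> ('n \<Rightarrow> nat) \<Rightarrow> ('n \<Rightarrow> nat) \<Rightarrow> bool" where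
  "feasible S a b \<longleftrightarrow> (\<exists>c::'n\<Rightarrow>'n\<Rightarrow>nat. (\<forall>h. (\<Sum>k\<in>UNIV. c h k) = a h) \<and> (\<forall>k. (\<Sum>h\<in>UNIV. c h k) = b k)
      \<and> (\<forall>h k. c h k \<noteq> 0 \<longrightarrow> S$h$k \<noteq> 0))"

lemma comb_zero:
  fixes E :: "('n::finite \<Rightarrow> nat) \<Rightarrow> ('n \<Rightarrow> nat) \<Rightarrow> complex" and S :: "complex^'n^'n"
  assumes R1: "\<And>a b h. E (a(h := Suc (a h))) b = (\<Sum>j\<in>UNIV. S$h$j * of_nat (b j) * E a (b(j := b j - 1)))"
  assumes R2: "\<And>a b k. E a (b(k := Suc (b k))) = (\<Sum>j\<in>UNIV. S$j$k * of_nat (a j) * E (a(j := a j - 1)) b)"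
  shows "\<not> feasible S a b \<Longrightarrow> E a b = 0"
proof (induction "sum a UNIV" arbitrary: a b rule: less_induct)
  case less
  show ?case
  proof (cases "\<exists>h. a h > 0")
    case True
    then obtain h where h: "a h > 0" by blast
    define a' where "a' = a(h := a h - 1)"
    have aa: "a = a'(h := Suc (a' h))" using h by (auto simp: a'_def)
    have lt: "sum a' UNIV < sum a UNIV"
    proof -
      have "sum a UNIV = a h + sum a (UNIV - {h})" by (simp add: sum.remove)
      moreover have "sum a' UNIV = a' h + sum a' (UNIV - {h})" by (simp add: sum.remove)
      moreover have "sum a' (UNIV - {h}) = sum a (UNIV - {h})" by (auto simp: a'_def intro: sum.cong)
      ultimately show ?thesis using h by (simp add: a'_def)
    qed
    have "E a b = (\<Sum>j\<in>UNIV. S$h$j * of_nat (b j) * E a' (b(j := b j - 1)))"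
      by (subst aa, rule R1)
    also have "\<dots> = 0"
    proof (rule sum.neutral, intro ballI)
      fix j
      show "S$h$j * of_nat (b j) * E a' (b(j := b j - 1)) = 0"
      proof (cases "S$h$j = 0 \<or> b j = 0")
        case True then show ?thesis by auto
      next
        case False
        have "\<not> feasible S a' (b(j := b j - 1))"
        proof
          assume "feasible S a' (b(j := b j - 1))"
          then obtain c where c1: "\<forall>h. (\<Sum>k\<in>UNIV. c h k) = a' h" and c2: "\<forall>k. (\<Sum>h\<in>UNIV. c h k) = (b(j := b j - 1)) k"
            and c3: "\<forall>h k. c h k \<noteq> 0 \<longrightarrow> S$h$k \<noteq> 0" unfolding feasible_def by blast
          define c' where "c' = (\<lambda>h' k'. c h' k' + (if h' = h \<and> k' = j then 1 else 0))"
          have "feasible S a b" unfolding feasible_def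
          proof (intro exI[of _ c'] conjI allI impI)
            fix h' show "(\<Sum>k\<in>UNIV. c' h' k) = a h'"
              using c1[rule_format, of h'] h by (auto simp: c'_def sum.distrib a'_def)
          next
            fix k show "(\<Sum>h\<in>UNIV. c' h k) = b k"
              using c2[rule_format, of k] False by (auto simp: c'_def sum.distrib)
          next
            fix h' k assume "c' h' k \<noteq> 0" then show "S$h'$k \<noteq> 0"
              using c3 False by (auto simp: c'_def split: if_splits)
          qed
          with less.prems show False by blast
        qed
        then have "E a' (b(j := b j - 1)) = 0" using less.hyps lt by blast
        then show ?thesis by simp
      qed
    qed
    finally show ?thesis .
  next
    case False
    then have a0: "\<And>h. a h = 0" by auto
    show ?thesis
    proof (cases "\<exists>k. b k > 0")
      case True
      then obtain k where k: "b k > 0" by blast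
      define b' where "b' = b(k := b k - 1)"
      have bb: "b = b'(k := Suc (b' k))" using k by (auto simp: b'_def)
      show ?thesis by (subst bb, subst R2) (simp add: a0)
    next
      case False
      then have "feasible S a b" unfolding feasible_def using a0
        by (intro exI[of _ "\<lambda>_ _. 0"]) auto
      with less.prems show ?thesis by blast
    qed
  qed
qed

lemma cond_not_feasible:
  fixes S :: "complex^'n::finite^'n" and nn mm :: "'n \<Rightarrow> nat"
  assumes "(\<exists>h \<in> Nset nn. SN S mm h = {}) \<or> (\<exists>k \<in> Mset mm. SM S nn k = {})
           \<or> ((\<forall>h \<in> Nset nn. SN S mm h \<noteq> {}) \<and>
              (\<exists>Mr \<in> M_blocks S nn mm.
                 (\<Sum>i \<in> {i \<in> Nset nn. SN S mm i \<subseteq> Mr}. nn i) \<noteq> (\<Sum>j \<in> Mr. mm j)))"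
  shows "\<not> feasible S nn mm"
proof
  assume "feasible S nn mm"
  then obtain c where c1: "\<And>h. (\<Sum>k\<in>UNIV. c h k) = nn h" and c2: "\<And>k. (\<Sum>h\<in>UNIV. c h k) = mm k"
    and c3: "\<And>h k. c h k \<noteq> 0 \<Longrightarrow> S$h$k \<noteq> 0" unfolding feasible_def by blast
  have cle1: "c h k \<le> mm k" for h k
    unfolding c2[symmetric] by (rule member_le_sum) auto
  have cle2: "c h k \<le> nn h" for h k
    unfolding c1[symmetric] by (rule member_le_sum) auto
  have inSN: "c h k \<noteq> 0 \<Longrightarrow> k \<in> SN S mm h" for h k
    using c3[of h k] cle1[of h k] by (auto simp: SN_def Mset_def)
  show False
    using assms
  proof (elim disjE conjE bexE)
    fix h assume h: "h \<in> Nset nn" "SN S mm h = {}"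
    then have "(\<Sum>k\<in>UNIV. c h k) \<noteq> 0" using c1 by (simp add: Nset_def)
    then obtain k where "c h k \<noteq> 0" by (meson sum.neutral)
    then show False using inSN h by blast
  next
    fix k assume k: "k \<in> Mset mm" "SM S nn k = {}"
    then have "(\<Sum>h\<in>UNIV. c h k) \<noteq> 0" using c2 by (simp add: Mset_def)
    then obtain h where "c h k \<noteq> 0" by (meson sum.neutral)
    moreover have "nn h \<noteq> 0" using calculation cle2[of h k] by linarith
    ultimately show False using c3[of h k] k by (auto simp: SM_def Nset_def) (metis less_numeral_extra(3))
  next
    fix Mr assume Mr: "Mr \<in> M_blocks S nn mm"
      and ne: "(\<Sum>i \<in> {i \<in> Nset nn. SN S mm i \<subseteq> Mr}. nn i) \<noteq> (\<Sum>j \<in> Mr. mm j)"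
    from Mr obtain k0 where Mrdef: "Mr = {k' \<in> Mset mm. (k0, k') \<in> (M_adj S nn mm)\<^sup>*}"
      unfolding M_blocks_def by blast
    have key: "(\<Sum>j\<in>Mr. c h j) = (if h \<in> Nset nn \<and> SN S mm h \<subseteq> Mr then nn h else 0)" for h
    proof (cases "h \<in> Nset nn")
      case False
      then have "c h j = 0" for j using cle2[of h j] by (simp add: Nset_def)
      then show ?thesis using False by simp
    next
      case hN: True
      show ?thesis
      proof (cases "SN S mm h \<subseteq> Mr")
        case True
        have "(\<Sum>j\<in>Mr. c h j) = (\<Sum>j\<in>UNIV. c h j)"
          by (rule sum.mono_neutral_left) (use True inSN in auto)
        then show ?thesis using True hN c1 by simp
      next
        case False
        then obtain k' where k': "k' \<in> SN S mm h" "k' \<notin> Mr" by blast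
        have "c h j = 0" if j: "j \<in> Mr" for j
        proof (rule ccontr)
          assume "c h j \<noteq> 0"
          then have "j \<in> SN S mm h" by (rule inSN)
          then have "(j, k') \<in> M_adj S nn mm" using k' hN unfolding M_adj_def by blast
          moreover have "(k0, j) \<in> (M_adj S nn mm)\<^sup>*" using j Mrdef by blast
          ultimately have "(k0, k') \<in> (M_adj S nn mm)\<^sup>*" by (meson rtrancl_into_rtrancl)
          moreover have "k' \<in> Mset mm" using k' by (simp add: SN_def)
          ultimately show False using k' Mrdef by blast
        qed
        then show ?thesis using False by simp
      qed
    qed
    have "(\<Sum>j \<in> Mr. mm j) = (\<Sum>j\<in>Mr. \<Sum>h\<in>UNIV. c h j)" using c2 by simp
    also have "\<dots> = (\<Sum>h\<in>UNIV. \<Sum>j\<in>Mr. c h j)" by (rule sum.swap)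
    also have "\<dots> = (\<Sum>h\<in>UNIV. if h \<in> Nset nn \<and> SN S mm h \<subseteq> Mr then nn h else 0)" using key by simp
    also have "\<dots> = (\<Sum>i \<in> {i \<in> Nset nn. SN S mm i \<subseteq> Mr}. nn i)"
      by (simp add: sum.If_cases Int_def)
    finally show False using ne by simp
  qed
qed




lemma gauss1_integrable:
  assumes "b > (0::real)"
  shows "integrable lborel (\<lambda>x::real. exp (- b * x\<^sup>2))"
proof -
  have "has_bochner_integral lborel (\<lambda>x::real. exp (-x\<^sup>2)*x^(2 * 0)) (sqrt pi * (fact (2 * 0) / (2 ^ (2 * 0) * fact 0)))"
    using has_bochner_integral_even_function[OF gaussian_moment_even_pos[where k=0]] by simp
  then have "integrable lborel (\<lambda>x::real. exp (-x\<^sup>2))" by (simp add: has_bochner_integral_iff)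
  from lborel_integrable_real_affine[OF this, of "sqrt b" 0] assms
  have "integrable lborel (\<lambda>x. exp (- (sqrt b * x)\<^sup>2))" by simp
  moreover have "(sqrt b * x)\<^sup>2 = b * x\<^sup>2" for x using assms by (simp add: power_mult_distrib)
  ultimately show ?thesis by simp
qed

lemma norm_sum_basis_sq:
  fixes f :: "'a::euclidean_space \<Rightarrow> real"
  shows "(norm (\<Sum>u\<in>Basis. f u *\<^sub>R u))\<^sup>2 = (\<Sum>u\<in>Basis. (f u)\<^sup>2)"
proof -
  let ?x = "(\<Sum>u\<in>Basis. f u *\<^sub>R u)"
  have "(norm ?x)\<^sup>2 = ?x \<bullet> ?x" by (simp add: power2_norm_eq_inner)
  also have "\<dots> = (\<Sum>b\<in>Basis. (?x \<bullet> b) * (?x \<bullet> b))" by (rule euclidean_inner)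
  also have "\<dots> = (\<Sum>b\<in>Basis. (f b)\<^sup>2)" by (simp add: inner_sum_left_Basis power2_eq_square)
  finally show ?thesis .
qed

lemma cont_meas:
  "continuous_on UNIV f \<Longrightarrow> f \<in> borel_measurable lborel"
  using borel_measurable_continuous_onI by (simp add: measurable_lborel1)

lemma gauss_integrable:
  assumes "b > (0::real)"
  shows "integrable lborel (\<lambda>z::'a::euclidean_space. exp (- b * (norm z)\<^sup>2))"
proof (rule integrableI_bounded)
  show "(\<lambda>z::'a. exp (- b * (norm z)\<^sup>2)) \<in> borel_measurable lborel"
    by (intro cont_meas continuous_intros)
  interpret P: product_sigma_finite "\<lambda>_::'a. lborel :: real measure" by standard
  have "(\<integral>\<^sup>+ z. ennreal (norm (exp (- b * (norm (z::'a))\<^sup>2))) \<partial>lborel)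
     = (\<integral>\<^sup>+ z. ennreal (exp (- b * (norm (z::'a))\<^sup>2)) \<partial>distr (\<Pi>\<^sub>M u\<in>Basis. lborel) borel (\<lambda>f. \<Sum>u\<in>Basis. f u *\<^sub>R u))"
    by (subst lborel_eq[symmetric]) simp
  also have "\<dots> = (\<integral>\<^sup>+ f. ennreal (exp (- b * (norm (\<Sum>u\<in>Basis. f u *\<^sub>R u :: 'a))\<^sup>2)) \<partial>(\<Pi>\<^sub>M u\<in>(Basis::'a set). lborel))"
    by (subst nn_integral_distr) (auto intro!: borel_measurable_continuous_onI continuous_intros)
  also have "\<dots> = (\<integral>\<^sup>+ f. (\<Prod>u\<in>(Basis::'a set). ennreal (exp (- b * (f u)\<^sup>2))) \<partial>(\<Pi>\<^sub>M u\<in>(Basis::'a set). lborel))"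
    by (intro nn_integral_cong)
       (simp add: norm_sum_basis_sq sum_distrib_left exp_sum prod_ennreal[symmetric])
  also have "\<dots> = (\<Prod>u\<in>(Basis::'a set). \<integral>\<^sup>+ x. ennreal (exp (- b * x\<^sup>2)) \<partial>lborel)"
    by (rule P.product_nn_integral_prod) auto
  also have "\<dots> < \<infinity>"
  proof -
    have "integrable lborel (\<lambda>x::real. exp (- b * x\<^sup>2))" by (rule gauss1_integrable[OF assms])
    then have "(\<integral>\<^sup>+ x. ennreal (norm (exp (- b * x\<^sup>2))) \<partial>lborel) < \<infinity>"
      by (simp add: integrable_iff_bounded)
    then have "(\<integral>\<^sup>+ x. ennreal (exp (- b * x\<^sup>2)) \<partial>lborel) < \<infinity>" by simp
    then show ?thesis by (simp add: less_top[symmetric] ennreal_prod_eq_top power_eq_top_ennreal)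
  qed
  finally show "(\<integral>\<^sup>+ z. ennreal (norm (exp (- b * (norm (z::'a))\<^sup>2))) \<partial>lborel) < \<infinity>" .
qed




lemma poly_exp_bound:
  assumes "c > (0::real)" "r \<ge> 0"
  shows "(1 + r)^K \<le> exp (real K ^ 2 / (4 * c)) * exp (c * r\<^sup>2)"
proof -
  have "(1 + r)^K \<le> (exp r)^K" using assms by (intro power_mono) auto
  also have "\<dots> = exp (real K * r)" by (simp add: exp_of_nat_mult)
  also have "\<dots> \<le> exp (real K ^ 2 / (4 * c) + c * r\<^sup>2)"
  proof -
    have "0 \<le> c * (r - real K / (2 * c))\<^sup>2" using assms by simp
    also have "c * (r - real K / (2 * c))\<^sup>2 = c * r\<^sup>2 - real K * r + real K ^ 2 / (4 * c)"
      using assms by (simp add: power2_eq_square field_simps)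
    finally show ?thesis by simp
  qed
  also have "\<dots> = exp (real K ^ 2 / (4 * c)) * exp (c * r\<^sup>2)" by (simp add: exp_add)
  finally show ?thesis .
qed

lemma int_poly_gauss:
  fixes f :: "'a::euclidean_space \<Rightarrow> 'b::{banach, second_countable_topology}"
  assumes meas: "f \<in> borel_measurable lborel" and a: "a > 0"
    and bnd: "\<And>z. norm (f z) \<le> C * (1 + norm z)^K * exp (- a * (norm z)\<^sup>2)"
  shows "integrable lborel f"
proof (rule Bochner_Integration.integrable_bound[OF _ meas])
  let ?C = "\<bar>C\<bar> * exp (real K ^ 2 / (4 * (a/2)))"
  show "integrable lborel (\<lambda>z::'a. ?C * exp (- (a/2) * (norm z)\<^sup>2))"
    using gauss_integrable[of "a/2"] a by (intro integrable_mult_right) auto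
  show "AE z in lborel. norm (f z) \<le> norm (?C * exp (- (a/2) * (norm z)\<^sup>2))"
  proof (intro AE_I2)
    fix z :: 'a
    have "norm (f z) \<le> C * (1 + norm z)^K * exp (- a * (norm z)\<^sup>2)" by (rule bnd)
    also have "\<dots> \<le> \<bar>C\<bar> * (1 + norm z)^K * exp (- a * (norm z)\<^sup>2)"
      by (intro mult_right_mono) auto
    also have "\<dots> \<le> \<bar>C\<bar> * (exp (real K ^ 2 / (4 * (a/2))) * exp ((a/2) * (norm z)\<^sup>2)) * exp (- a * (norm z)\<^sup>2)"
      using poly_exp_bound[of "a/2" "norm z" K] a by (intro mult_right_mono mult_left_mono) auto
    also have "\<dots> = ?C * exp (- (a/2) * (norm z)\<^sup>2)"
      by (simp add: mult.assoc exp_add[symmetric])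
    also have "\<dots> \<le> norm (?C * exp (- (a/2) * (norm z)\<^sup>2))" by simp
    finally show "norm (f z) \<le> norm (?C * exp (- (a/2) * (norm z)\<^sup>2))" .
  qed
qed

lemma hf_alt: "herm_form A z = (\<Sum>i\<in>UNIV. cnj (z$i) * (A *v z)$i)"
  by (simp add: herm_form_def matrix_vector_mult_def sum_distrib_left mult.assoc)

lemma vec_scaleR_comp: "(c *\<^sub>R z) $ i = complex_of_real c * z $ i"
  unfolding vector_scaleR_component by (rule scaleR_conv_of_real)

lemma hf_scale: "herm_form A (c *\<^sub>R z) = complex_of_real (c\<^sup>2) * herm_form A z"
  unfolding herm_form_def vec_scaleR_comp
  by (simp add: sum_distrib_left power2_eq_square mult_ac)

lemma pd_facts:
  fixes S :: "complex^'n^'n"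
  assumes pd: "herm_pos_def S"
  shows "S ** matrix_inv S = mat 1" "matrix_inv S ** S = mat 1"
    "\<exists>l>0. \<forall>z. l * (norm z)\<^sup>2 \<le> Re (herm_form (matrix_inv S) z)"
proof -
  have pos: "\<And>z. z \<noteq> 0 \<Longrightarrow> Re (herm_form S z) > 0" using pd by (simp add: herm_pos_def_def)
  have "\<forall>x. S *v x = 0 \<longrightarrow> x = 0"
  proof (intro allI impI)
    fix x assume "S *v x = 0"
    then have "herm_form S x = 0" by (simp add: hf_alt)
    then show "x = 0" using pos[of x] by (cases "x = 0") auto
  qed
  then have "invertible S" by (simp add: invertible_left_inverse matrix_left_invertible_ker)
  then have inv: "S ** matrix_inv S = mat 1 \<and> matrix_inv S ** S = mat 1"
    unfolding invertible_def matrix_inv_def by (rule someI_ex)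
  then show "S ** matrix_inv S = mat 1" "matrix_inv S ** S = mat 1" by auto
  let ?P = "matrix_inv S"
  let ?f = "\<lambda>z::complex^'n. Re (herm_form ?P z)"
  have posP: "?f z > 0" if "z \<noteq> 0" for z
  proof -
    define w where "w = ?P *v z"
    have Sw: "S *v w = z" using inv by (simp add: w_def matrix_vector_mul_assoc)
    have "w \<noteq> 0" using Sw that by auto
    have "herm_form ?P z = cnj (herm_form S w)"
      by (simp add: hf_alt Sw w_def[symmetric] mult.commute)
    then have "?f z = Re (herm_form S w)" by simp
    then show ?thesis using pos[OF \<open>w \<noteq> 0\<close>] by simp
  qed
  have cont: "continuous_on UNIV ?f" unfolding herm_form_def by (intro continuous_intros)
  obtain x1 :: "complex^'n" where "norm x1 = 1" using vector_choose_size[of 1] by auto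
  then have "x1 \<in> sphere (0::complex^'n) 1" by simp
  then have "sphere (0::complex^'n) 1 \<noteq> {}" by blast
  from continuous_attains_inf[OF compact_sphere this continuous_on_subset[OF cont]]
  obtain z0 where z0: "z0 \<in> sphere 0 1" "\<And>y. y \<in> sphere 0 1 \<Longrightarrow> ?f z0 \<le> ?f y" by auto
  have "z0 \<noteq> 0" using z0 by auto
  then have l: "?f z0 > 0" by (rule posP)
  show "\<exists>l>0. \<forall>z. l * (norm z)\<^sup>2 \<le> ?f z"
  proof (intro exI[of _ "?f z0"] conjI allI l)
    fix z :: "complex^'n"
    show "?f z0 * (norm z)\<^sup>2 \<le> ?f z"
    proof (cases "z = 0")
      case True then show ?thesis by (simp add: herm_form_def)
    next
      case False
      define u where "u = (1 / norm z) *\<^sub>R z"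
      have u: "u \<in> sphere 0 1" using False by (simp add: u_def)
      have zu: "z = norm z *\<^sub>R u" using False by (simp add: u_def)
      have "?f z = (norm z)\<^sup>2 * ?f u" by (subst zu, simp only: hf_scale) simp
      then show ?thesis using z0(2)[OF u] mult_left_mono[OF z0(2)[OF u], of "(norm z)\<^sup>2"]
        by (simp add: mult.commute[of _ "(norm z)\<^sup>2"])
    qed
  qed
qed




definition cmono :: "('n \<Rightarrow> nat) \<Rightarrow> ('n \<Rightarrow> nat) \<Rightarrow> complex^'n \<Rightarrow> complex" where
  "cmono a b z = (\<Prod>j\<in>UNIV. (z$j)^a j * (cnj (z$j))^b j)"

definition rho :: "complex^'n^'n \<Rightarrow> complex^'n \<Rightarrow> complex" where
  "rho P z = exp (- herm_form P z)"

definition Gf :: "complex^'n^'n \<Rightarrow> ('n \<Rightarrow> nat) \<Rightarrow> ('n \<Rightarrow> nat) \<Rightarrow> complex^'n \<Rightarrow> complex^'n \<Rightarrow> complex \<Rightarrow> complex" where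
  "Gf P a b v z w = (\<Prod>j\<in>UNIV. (z$j + w * v$j)^a j * (cnj (z$j) + w * cnj (v$j))^b j) *
     exp (- (\<Sum>i\<in>UNIV. \<Sum>j\<in>UNIV. (cnj (z$i) + w * cnj (v$i)) * P$i$j * (z$j + w * v$j)))"

definition ell :: "complex^'n^'n \<Rightarrow> complex^'n \<Rightarrow> complex^'n \<Rightarrow> complex" where
  "ell P v z = (\<Sum>i\<in>UNIV. \<Sum>j\<in>UNIV. cnj (v$i) * P$i$j * z$j + cnj (z$i) * P$i$j * v$j)"

definition Dv :: "complex^'n^'n \<Rightarrow> ('n \<Rightarrow> nat) \<Rightarrow> ('n \<Rightarrow> nat) \<Rightarrow> complex^'n \<Rightarrow> complex^'n \<Rightarrow> complex" where
  "Dv P a b v z = (\<Sum>i\<in>UNIV. of_nat (a i) * v$i * cmono (a(i := a i - 1)) b z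
        + of_nat (b i) * cnj (v$i) * cmono a (b(i := b i - 1)) z) * rho P z
     - ell P v z * cmono a b z * rho P z"

lemma vec_shift_comp: "(z + t *\<^sub>R v) $ j = z$j + complex_of_real t * v$j"
  by (simp only: vector_add_component vec_scaleR_comp)

lemma G1: "Gf P a b v z (complex_of_real t) = cmono a b (z + t *\<^sub>R v) * rho P (z + t *\<^sub>R v)"
  unfolding Gf_def cmono_def rho_def herm_form_def vec_shift_comp by simp

lemma G2: "Gf P a b v z (complex_of_real s + w) = Gf P a b v (z + s *\<^sub>R v) w"
  unfolding Gf_def vec_shift_comp by (simp add: algebra_simps)

lemma mono_upd_a: "cmono (a(i := k)) b z = (z$i ^ k * cnj (z$i) ^ b i) * (\<Prod>j\<in>UNIV-{i}. z$j ^ a j * cnj (z$j) ^ b j)"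
  unfolding cmono_def by (subst prod.remove[of UNIV i]) (auto intro!: prod.cong)

lemma mono_upd_b: "cmono a (b(i := k)) z = (z$i ^ a i * cnj (z$i) ^ k) * (\<Prod>j\<in>UNIV-{i}. z$j ^ a j * cnj (z$j) ^ b j)"
  unfolding cmono_def by (subst prod.remove[of UNIV i]) (auto intro!: prod.cong)

lemma G3: "(Gf P a b v z has_field_derivative Dv P a b v z) (at 0)"
proof -
  define f where "f = (\<lambda>j w. (z$j + w * v$j)^a j * (cnj (z$j) + w * cnj (v$j))^b j)"
  define f' where "f' = (\<lambda>j. of_nat (a j) * v$j * (z$j ^ (a j - 1) * cnj (z$j) ^ b j)
      + of_nat (b j) * cnj (v$j) * (z$j ^ a j * cnj (z$j) ^ (b j - 1)))"
  have df: "(f j has_field_derivative f' j) (at 0)" for j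
    unfolding f_def f'_def by (auto intro!: derivative_eq_intros simp: algebra_simps)
  have dP: "((\<lambda>w. \<Prod>j\<in>UNIV. f j w) has_field_derivative (\<Sum>i\<in>UNIV. f' i * (\<Prod>y\<in>UNIV-{i}. f y 0))) (at 0)"
    by (rule has_field_derivative_prod) (rule df)
  have sumeq: "(\<Sum>i\<in>UNIV. f' i * (\<Prod>y\<in>UNIV-{i}. f y 0)) =
     (\<Sum>i\<in>UNIV. of_nat (a i) * v$i * cmono (a(i := a i - 1)) b z
        + of_nat (b i) * cnj (v$i) * cmono a (b(i := b i - 1)) z)"
    unfolding mono_upd_a mono_upd_b f_def f'_def by (intro sum.cong refl) (simp add: algebra_simps)
  define Q where "Q = (\<lambda>w. \<Sum>i\<in>UNIV. \<Sum>j\<in>UNIV. (cnj (z$i) + w * cnj (v$i)) * P$i$j * (z$j + w * v$j))"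
  have dQ: "(Q has_field_derivative ell P v z) (at 0)"
    unfolding Q_def ell_def by (auto intro!: derivative_eq_intros sum.cong simp: algebra_simps)
  have dE: "((\<lambda>w. exp (- Q w)) has_field_derivative exp (- Q 0) * (- ell P v z)) (at 0)"
    by (auto intro!: derivative_eq_intros dQ)
  have Q0: "Q 0 = herm_form P z" by (simp add: Q_def herm_form_def)
  have P0: "(\<Prod>j\<in>UNIV. f j 0) = cmono a b z" by (simp add: f_def cmono_def)
  have G: "Gf P a b v z = (\<lambda>w. (\<Prod>j\<in>UNIV. f j w) * exp (- Q w))"
    by (simp add: fun_eq_iff Gf_def f_def Q_def)
  show ?thesis unfolding G
    using DERIV_mult[OF dP dE] unfolding sumeq Q0 P0
    by (simp add: Dv_def rho_def algebra_simps)
qed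

lemma G4: "(Gf P a b v z has_field_derivative Dv P a b v (z + s *\<^sub>R v)) (at (complex_of_real s))"
proof -
  have eq: "(\<lambda>w. Gf P a b v z (w + complex_of_real s)) = Gf P a b v (z + s *\<^sub>R v)"
    by (rule ext) (metis G2 add.commute)
  have "((\<lambda>w. Gf P a b v z (w + complex_of_real s)) has_field_derivative Dv P a b v (z + s *\<^sub>R v)) (at 0)"
    unfolding eq by (rule G3)
  then show ?thesis using DERIV_shift[of "Gf P a b v z" _ 0 "complex_of_real s"] by simp
qed




lemma mono_bound:
  assumes "\<And>j. a' j \<le> a j" "\<And>j. b' j \<le> b j"
  shows "norm (cmono a' b' y) \<le> (1 + norm y)^(sum a UNIV + sum b UNIV)"
proof -
  have "norm (cmono a' b' y) = (\<Prod>j\<in>UNIV. norm (y$j)^a' j * norm (y$j)^b' j)"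
    by (simp add: cmono_def prod_norm[symmetric] norm_mult norm_power)
  also have "\<dots> \<le> (\<Prod>j\<in>UNIV. (1 + norm y)^(a j + b j))"
  proof (rule prod_mono, intro conjI)
    fix j
    have yj: "norm (y$j) \<le> 1 + norm y" using Finite_Cartesian_Product.norm_nth_le[of y j] by simp
    have "norm (y$j)^a' j \<le> (1 + norm y)^a' j" by (rule power_mono[OF yj]) simp
    also have "\<dots> \<le> (1 + norm y)^a j" by (rule power_increasing[OF assms(1)]) simp
    finally have 1: "norm (y$j)^a' j \<le> (1 + norm y)^a j" .
    have "norm (y$j)^b' j \<le> (1 + norm y)^b' j" by (rule power_mono[OF yj]) simp
    also have "\<dots> \<le> (1 + norm y)^b j" by (rule power_increasing[OF assms(2)]) simp
    finally have 2: "norm (y$j)^b' j \<le> (1 + norm y)^b j" .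
    show "norm (y$j)^a' j * norm (y$j)^b' j \<le> (1 + norm y)^(a j + b j)"
      unfolding power_add by (rule mult_mono[OF 1 2]) auto
  qed simp
  also have "\<dots> = (1 + norm y)^(sum a UNIV + sum b UNIV)"
    by (simp add: power_sum[symmetric] sum.distrib)
  finally show ?thesis .
qed

lemma rho_bound:
  assumes "\<And>z. l * (norm z)\<^sup>2 \<le> Re (herm_form P z)"
  shows "norm (rho P y) \<le> exp (- l * (norm y)\<^sup>2)"
  using assms[of y] by (simp add: rho_def)

lemma ell_bound:
  "norm (ell P v y) \<le> (\<Sum>i\<in>UNIV. \<Sum>j\<in>UNIV. 2 * norm v * norm (P$i$j)) * (1 + norm y)"
proof -
  have "norm (ell P v y) \<le> (\<Sum>i\<in>UNIV. norm (\<Sum>j\<in>UNIV. cnj (v$i) * P$i$j * y$j + cnj (y$i) * P$i$j * v$j))"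
    unfolding ell_def by (rule norm_sum)
  also have "\<dots> \<le> (\<Sum>i\<in>UNIV. \<Sum>j\<in>UNIV. norm (cnj (v$i) * P$i$j * y$j + cnj (y$i) * P$i$j * v$j))"
    by (intro sum_mono norm_sum)
  also have "\<dots> \<le> (\<Sum>i\<in>UNIV. \<Sum>j\<in>UNIV. 2 * norm v * norm (P$i$j) * (1 + norm y))"
  proof (intro sum_mono)
    fix i j
    have vi: "norm (v$i) \<le> norm v" "norm (v$j) \<le> norm v" by (rule Finite_Cartesian_Product.norm_nth_le)+
    have yi: "norm (y$i) \<le> 1 + norm y" "norm (y$j) \<le> 1 + norm y"
      using Finite_Cartesian_Product.norm_nth_le[of y i] Finite_Cartesian_Product.norm_nth_le[of y j] by auto
    have "norm (cnj (v$i) * P$i$j * y$j + cnj (y$i) * P$i$j * v$j)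
        \<le> norm (v$i) * norm (P$i$j) * norm (y$j) + norm (y$i) * norm (P$i$j) * norm (v$j)"
      by (rule order_trans[OF norm_triangle_ineq]) (simp add: norm_mult)
    also have "\<dots> \<le> norm v * norm (P$i$j) * (1 + norm y) + (1 + norm y) * norm (P$i$j) * norm v"
      by (intro add_mono mult_mono vi yi) auto
    finally show "norm (cnj (v$i) * P$i$j * y$j + cnj (y$i) * P$i$j * v$j) \<le> 2 * norm v * norm (P$i$j) * (1 + norm y)"
      by (simp add: algebra_simps)
  qed
  also have "\<dots> = (\<Sum>i\<in>UNIV. \<Sum>j\<in>UNIV. 2 * norm v * norm (P$i$j)) * (1 + norm y)"
    by (simp add: sum_distrib_right)
  finally show ?thesis .
qed

definition CD :: "complex^'n^'n \<Rightarrow> ('n \<Rightarrow> nat) \<Rightarrow> ('n \<Rightarrow> nat) \<Rightarrow> complex^'n \<Rightarrow> real" where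
  "CD P a b v = (\<Sum>i\<in>UNIV. real (a i + b i)) * norm v + (\<Sum>i\<in>UNIV. \<Sum>j\<in>UNIV. 2 * norm v * norm (P$i$j))"

lemma CD_nonneg: "CD P a b v \<ge> 0"
  unfolding CD_def by (intro add_nonneg_nonneg mult_nonneg_nonneg sum_nonneg) auto

lemma Dv_bound:
  assumes "\<And>z. l * (norm z)\<^sup>2 \<le> Re (herm_form P z)"
  shows "norm (Dv P a b v y) \<le> CD P a b v * (1 + norm y)^(sum a UNIV + sum b UNIV + 1) * exp (- l * (norm y)\<^sup>2)"
proof -
  let ?K = "sum a UNIV + sum b UNIV"
  let ?r = "1 + norm y"
  let ?A = "(\<Sum>i\<in>UNIV. real (a i + b i)) * norm v"
  let ?L = "(\<Sum>i\<in>UNIV. \<Sum>j\<in>UNIV. 2 * norm v * norm (P$i$j))"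
  have r1: "?r \<ge> 1" by simp
  have "norm (\<Sum>i\<in>UNIV. of_nat (a i) * v$i * cmono (a(i := a i - 1)) b y
        + of_nat (b i) * cnj (v$i) * cmono a (b(i := b i - 1)) y)
      \<le> (\<Sum>i\<in>UNIV. norm (of_nat (a i) * v$i * cmono (a(i := a i - 1)) b y
        + of_nat (b i) * cnj (v$i) * cmono a (b(i := b i - 1)) y))" by (rule norm_sum)
  also have "\<dots> \<le> (\<Sum>i\<in>UNIV. real (a i + b i) * norm v * ?r^?K)"
  proof (intro sum_mono)
    fix i
    have m1: "norm (cmono (a(i := a i - 1)) b y) \<le> ?r^?K" by (rule mono_bound) auto
    have m2: "norm (cmono a (b(i := b i - 1)) y) \<le> ?r^?K" by (rule mono_bound) auto
    have vi: "norm (v$i) \<le> norm v" by (rule Finite_Cartesian_Product.norm_nth_le)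
    have "norm (of_nat (a i) * v$i * cmono (a(i := a i - 1)) b y
        + of_nat (b i) * cnj (v$i) * cmono a (b(i := b i - 1)) y)
      \<le> real (a i) * norm (v$i) * norm (cmono (a(i := a i - 1)) b y) + real (b i) * norm (v$i) * norm (cmono a (b(i := b i - 1)) y)"
      by (rule order_trans[OF norm_triangle_ineq]) (simp add: norm_mult)
    also have "\<dots> \<le> real (a i) * norm v * ?r^?K + real (b i) * norm v * ?r^?K"
      by (intro add_mono mult_mono m1 m2 vi) auto
    finally show "norm (of_nat (a i) * v$i * cmono (a(i := a i - 1)) b y
        + of_nat (b i) * cnj (v$i) * cmono a (b(i := b i - 1)) y) \<le> real (a i + b i) * norm v * ?r^?K"
      by (simp add: algebra_simps)
  qed
  also have "\<dots> = ?A * ?r^?K" by (simp add: sum_distrib_right)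
  finally have s1: "norm (\<Sum>i\<in>UNIV. of_nat (a i) * v$i * cmono (a(i := a i - 1)) b y
        + of_nat (b i) * cnj (v$i) * cmono a (b(i := b i - 1)) y) \<le> ?A * ?r^?K" .
  have s2: "norm (ell P v y) * norm (cmono a b y) \<le> ?L * ?r^(?K+1)"
  proof -
    have "norm (ell P v y) * norm (cmono a b y) \<le> (?L * ?r) * ?r^?K"
      by (intro mult_mono ell_bound mono_bound) (auto intro!: sum_nonneg mult_nonneg_nonneg)
    then show ?thesis by (simp add: algebra_simps)
  qed
  have rK: "?r^?K \<le> ?r^(?K+1)" by (rule power_increasing) auto
  have A0: "?A \<ge> 0" by (intro mult_nonneg_nonneg sum_nonneg) auto
  have R: "norm (rho P y) \<le> exp (- l * (norm y)\<^sup>2)" by (rule rho_bound[OF assms])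
  have "norm (Dv P a b v y) \<le> norm (\<Sum>i\<in>UNIV. of_nat (a i) * v$i * cmono (a(i := a i - 1)) b y
        + of_nat (b i) * cnj (v$i) * cmono a (b(i := b i - 1)) y) * norm (rho P y)
      + norm (ell P v y) * norm (cmono a b y) * norm (rho P y)"
    unfolding Dv_def by (rule order_trans[OF norm_triangle_ineq4]) (simp add: norm_mult)
  also have "\<dots> \<le> ?A * ?r^?K * norm (rho P y) + ?L * ?r^(?K+1) * norm (rho P y)"
    by (intro add_mono mult_right_mono s1 s2) auto
  also have "\<dots> = (?A * ?r^?K + ?L * ?r^(?K+1)) * norm (rho P y)" by (simp add: algebra_simps)
  also have "\<dots> \<le> CD P a b v * ?r^(?K+1) * norm (rho P y)"
    unfolding CD_def distrib_right
    by (intro mult_right_mono add_mono mult_left_mono rK A0) auto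
  also have "\<dots> \<le> CD P a b v * ?r^(?K+1) * exp (- l * (norm y)\<^sup>2)"
    by (intro mult_left_mono R mult_nonneg_nonneg CD_nonneg) auto
  finally show ?thesis .
qed

lemma Dv_bound_shift:
  assumes "\<And>z. l * (norm z)\<^sup>2 \<le> Re (herm_form P z)" "l > 0" "\<bar>s\<bar> \<le> 1"
  shows "norm (Dv P a b v (z + s *\<^sub>R v)) \<le>
    (CD P a b v * (1 + norm v)^(sum a UNIV + sum b UNIV + 1) * exp (l * (norm v)\<^sup>2))
     * (1 + norm z)^(sum a UNIV + sum b UNIV + 1) * exp (- (l/2) * (norm z)\<^sup>2)"
proof -
  let ?K = "sum a UNIV + sum b UNIV + 1"
  let ?y = "z + s *\<^sub>R v"
  have nsv: "norm (s *\<^sub>R v) \<le> norm v" using assms(3) by (simp add: mult_left_le_one_le)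
  have ny: "1 + norm ?y \<le> (1 + norm v) * (1 + norm z)"
  proof -
    have "norm ?y \<le> norm z + norm v" using norm_triangle_ineq[of z "s *\<^sub>R v"] nsv by linarith
    moreover have "0 \<le> norm v * norm z" by simp
    moreover have "(1 + norm v) * (1 + norm z) = 1 + norm z + norm v + norm v * norm z" by (simp add: algebra_simps)
    ultimately show ?thesis by linarith
  qed
  have nz: "(norm z)\<^sup>2 \<le> 2 * (norm ?y)\<^sup>2 + 2 * (norm v)\<^sup>2"
  proof -
    have "norm z \<le> norm ?y + norm v"
      using norm_triangle_ineq4[of ?y "s *\<^sub>R v"] nsv by simp
    then have "(norm z)\<^sup>2 \<le> (norm ?y + norm v)\<^sup>2" by (intro power_mono) auto
    also have "\<dots> \<le> 2 * (norm ?y)\<^sup>2 + 2 * (norm v)\<^sup>2"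
      using sum_squares_bound[of "norm ?y" "norm v"] by (simp add: power2_eq_square algebra_simps)
    finally show ?thesis .
  qed
  have e: "exp (- l * (norm ?y)\<^sup>2) \<le> exp (l * (norm v)\<^sup>2) * exp (- (l/2) * (norm z)\<^sup>2)"
  proof -
    have "- l * (norm ?y)\<^sup>2 \<le> l * (norm v)\<^sup>2 + (- (l/2) * (norm z)\<^sup>2)"
      using mult_left_mono[OF nz, of "l/2"] assms(2) by (simp add: algebra_simps)
    then show ?thesis by (simp add: exp_add[symmetric])
  qed
  have p: "(1 + norm ?y)^?K \<le> (1 + norm v)^?K * (1 + norm z)^?K"
    unfolding power_mult_distrib[symmetric] by (rule power_mono[OF ny]) auto
  have "norm (Dv P a b v ?y) \<le> CD P a b v * (1 + norm ?y)^?K * exp (- l * (norm ?y)\<^sup>2)"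
    by (rule Dv_bound[OF assms(1)])
  also have "\<dots> \<le> CD P a b v * ((1 + norm v)^?K * (1 + norm z)^?K) * (exp (l * (norm v)\<^sup>2) * exp (- (l/2) * (norm z)\<^sup>2))"
    by (intro mult_mono p e mult_nonneg_nonneg CD_nonneg order.refl) auto
  also have "\<dots> = (CD P a b v * (1 + norm v)^?K * exp (l * (norm v)\<^sup>2)) * (1 + norm z)^?K * exp (- (l/2) * (norm z)\<^sup>2)"
    by (simp add: algebra_simps)
  finally show ?thesis .
qed




lemma cont_mono: "continuous_on UNIV (cmono a b)"
  unfolding cmono_def by (intro continuous_intros)

lemma cont_rho: "continuous_on UNIV (rho P)"
  unfolding rho_def herm_form_def by (intro continuous_intros)

lemma cont_F: "continuous_on UNIV (\<lambda>z. cmono a b z * rho P z)"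
  using cont_mono cont_rho by (intro continuous_intros)

lemma cont_Dv: "continuous_on UNIV (Dv P a b v)"
  unfolding Dv_def ell_def fun_upd_def
  using cont_mono cont_rho by (intro continuous_intros)

lemma F_integrable:
  assumes l: "l > 0" and hyp: "\<And>z. l * (norm z)\<^sup>2 \<le> Re (herm_form P z)"
  shows "integrable lborel (\<lambda>z. cmono a b z * rho P z)"
proof (rule int_poly_gauss[OF cont_meas[OF cont_F] l])
  fix z
  have "norm (cmono a b z * rho P z) \<le> (1 + norm z)^(sum a UNIV + sum b UNIV) * exp (- l * (norm z)\<^sup>2)"
    unfolding norm_mult by (intro mult_mono mono_bound rho_bound[OF hyp]) auto
  then show "norm (cmono a b z * rho P z) \<le> 1 * (1 + norm z)^(sum a UNIV + sum b UNIV) * exp (- l * (norm z)\<^sup>2)"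
    by simp
qed

lemma Dv_integrable:
  assumes l: "l > 0" and hyp: "\<And>z. l * (norm z)\<^sup>2 \<le> Re (herm_form P z)"
  shows "integrable lborel (Dv P a b v)"
  by (rule int_poly_gauss[OF cont_meas[OF cont_Dv] l]) (rule Dv_bound[OF hyp])

lemma translate_integral:
  fixes F :: "'a::euclidean_space \<Rightarrow> complex"
  assumes "continuous_on UNIV F"
  shows "integral\<^sup>L lborel (\<lambda>z. F (c + z)) = integral\<^sup>L lborel F"
    and "integrable lborel F \<Longrightarrow> integrable lborel (\<lambda>z. F (c + z))"
proof -
  have m: "F \<in> borel_measurable borel" using assms by (rule borel_measurable_continuous_onI)
  have mc: "(+) c \<in> measurable lborel borel" by (simp add: measurable_lborel1)
  have "integral\<^sup>L lborel F = integral\<^sup>L (distr lborel borel ((+) c)) F" by (simp add: lborel_distr_plus)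
  also have "\<dots> = integral\<^sup>L lborel (\<lambda>z. F (c + z))" by (rule integral_distr[OF mc m])
  finally show "integral\<^sup>L lborel (\<lambda>z. F (c + z)) = integral\<^sup>L lborel F" by simp
  assume "integrable lborel F"
  then have "integrable (distr lborel borel ((+) c)) F" by (simp add: lborel_distr_plus)
  then show "integrable lborel (\<lambda>z. F (c + z))" by (simp add: integrable_distr_eq[OF mc m])
qed

lemma ibp:
  fixes P :: "complex^'n^'n"
  assumes l: "l > 0" and hyp: "\<And>z. l * (norm z)\<^sup>2 \<le> Re (herm_form P z)"
  shows "integral\<^sup>L lborel (Dv P a b v) = 0"
proof -
  define F where "F = (\<lambda>z. cmono a b z * rho P z)"
  define t where "t = (\<lambda>n. inverse (real (Suc n)))"
  define sq where "sq = (\<lambda>n z. (F (z + t n *\<^sub>R v) - F z) / complex_of_real (t n))"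
  let ?K = "sum a UNIV + sum b UNIV + 1"
  define C2 where "C2 = CD P a b v * (1 + norm v)^?K * exp (l * (norm v)\<^sup>2)"
  define W where "W = (\<lambda>z::complex^'n. C2 * (1 + norm z)^?K * exp (- (l/2) * (norm z)\<^sup>2))"
  have C2: "C2 \<ge> 0" unfolding C2_def by (intro mult_nonneg_nonneg CD_nonneg) auto
  have contF: "continuous_on UNIV F" unfolding F_def by (rule cont_F)
  have Fint: "integrable lborel F" unfolding F_def by (rule F_integrable[OF l hyp])
  have tpos: "t n > 0" "t n \<le> 1" for n by (auto simp: t_def field_simps)
  have GF: "Gf P a b v z (complex_of_real s) = F (z + s *\<^sub>R v)" for z s
    by (simp add: G1 F_def)
  have GF0: "Gf P a b v z 0 = F z" for z using GF[of z 0] by simp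
  have Wint: "integrable lborel W"
  proof (rule int_poly_gauss[of W "l/2" C2 ?K])
    show "W \<in> borel_measurable lborel" unfolding W_def by (intro cont_meas continuous_intros)
    show "l/2 > 0" using l by simp
    fix z show "norm (W z) \<le> C2 * (1 + norm z)^?K * exp (- (l/2) * (norm z)\<^sup>2)"
      using C2 by (simp add: W_def)
  qed
  have sq_meas: "sq n \<in> borel_measurable lborel" for n
  proof (rule cont_meas)
    have c1: "continuous_on UNIV (\<lambda>z. F (z + t n *\<^sub>R v))"
      by (rule continuous_on_compose2[OF contF]) (auto intro: continuous_intros)
    show "continuous_on UNIV (sq n)"
      unfolding sq_def using tpos(1)[of n] by (intro continuous_intros c1 contF) auto
  qed
  have lim: "(\<lambda>n. sq n z) \<longlonglongrightarrow> Dv P a b v z" for z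
  proof -
    have "((\<lambda>y. (Gf P a b v z y - Gf P a b v z 0) / (y - 0)) \<longlongrightarrow> Dv P a b v z) (at 0)"
      using G3[of P a b v z] by (simp only: has_field_derivative_iff)
    moreover have "filterlim (\<lambda>n. complex_of_real (t n)) (at 0) sequentially"
    proof (rule filterlim_atI)
      show "((\<lambda>n. complex_of_real (t n)) \<longlongrightarrow> 0) sequentially"
        unfolding t_def using tendsto_of_real[OF LIMSEQ_inverse_real_of_nat, where 'a=complex] by (simp only: of_real_0)
      show "eventually (\<lambda>n. complex_of_real (t n) \<noteq> 0) sequentially"
        using tpos(1) by (intro always_eventually) (simp add: less_imp_neq[symmetric])
    qed
    ultimately have "((\<lambda>n. (Gf P a b v z (complex_of_real (t n)) - Gf P a b v z 0) / (complex_of_real (t n) - 0)) \<longlongrightarrow> Dv P a b v z) sequentially"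
      by (rule filterlim_compose)
    then show ?thesis by (simp add: sq_def GF GF0)
  qed
  have bnd: "norm (sq n z) \<le> W z" for n z
  proof -
    let ?S = "complex_of_real ` {-1..1}"
    have cvx: "convex ?S" by (rule convex_linear_image[OF linear_of_real convex_real_interval(5)])
    have "norm (Gf P a b v z (complex_of_real (t n)) - Gf P a b v z 0) \<le> W z * norm (complex_of_real (t n) - 0)"
    proof (rule field_differentiable_bound[OF cvx])
      fix w assume "w \<in> ?S"
      then obtain s where s: "w = complex_of_real s" "s \<in> {-1..1}" by auto
      show "(Gf P a b v z has_field_derivative Dv P a b v (z + Re w *\<^sub>R v)) (at w within ?S)"
        unfolding s by (rule has_field_derivative_at_within) (simp add: G4)
      show "norm (Dv P a b v (z + Re w *\<^sub>R v)) \<le> W z"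
        unfolding W_def C2_def s using s(2) by (intro Dv_bound_shift[OF hyp l]) auto
    next
      show "complex_of_real (t n) \<in> ?S" using tpos[of n] by auto
      show "0 \<in> ?S" by (auto intro!: image_eqI[of 0 _ 0])
    qed
    then have "norm (F (z + t n *\<^sub>R v) - F z) \<le> W z * t n"
      using tpos[of n] by (simp add: GF GF0)
    then show ?thesis using tpos[of n] by (simp add: sq_def norm_divide divide_le_eq)
  qed
  have int0: "integral\<^sup>L lborel (sq n) = 0" for n
  proof -
    have i1: "integrable lborel (\<lambda>z. F (t n *\<^sub>R v + z))" by (rule translate_integral(2)[OF contF Fint])
    have "integral\<^sup>L lborel (sq n) = (integral\<^sup>L lborel (\<lambda>z. F (t n *\<^sub>R v + z)) - integral\<^sup>L lborel F) / complex_of_real (t n)"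
      unfolding sq_def using i1 Fint by (simp add: add.commute)
    also have "\<dots> = 0" by (simp add: translate_integral(1)[OF contF])
    finally show ?thesis .
  qed
  have "(\<lambda>n. integral\<^sup>L lborel (sq n)) \<longlonglongrightarrow> integral\<^sup>L lborel (Dv P a b v)"
    by (rule integral_dominated_convergence[OF cont_meas[OF cont_Dv] sq_meas Wint])
       (auto intro: lim bnd)
  then show ?thesis unfolding int0 by (simp add: LIMSEQ_const_iff)
qed




definition Em :: "complex^'n^'n \<Rightarrow> ('n \<Rightarrow> nat) \<Rightarrow> ('n \<Rightarrow> nat) \<Rightarrow> complex" where
  "Em P a b = (LINT z|lborel. cmono a b z * rho P z)"

lemma ell_axis: "ell P (axis j c) z = cnj c * (P *v z)$j + c * (\<Sum>i\<in>UNIV. cnj (z$i) * P$i$j)"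
proof -
  have "ell P (axis j c) z = (\<Sum>i\<in>UNIV. \<Sum>k\<in>UNIV. cnj (axis j c $ i) * P$i$k * z$k)
     + (\<Sum>i\<in>UNIV. \<Sum>k\<in>UNIV. cnj (z$i) * P$i$k * axis j c $ k)"
    by (simp add: ell_def sum.distrib)
  also have "(\<Sum>i\<in>UNIV. \<Sum>k\<in>UNIV. cnj (axis j c $ i) * P$i$k * z$k)
      = (\<Sum>i\<in>UNIV. if i = j then cnj c * (P *v z)$j else 0)"
    by (intro sum.cong refl) (auto simp: axis_def matrix_vector_mult_def sum_distrib_left mult.assoc)
  also have "\<dots> = cnj c * (P *v z)$j" by simp
  also have "(\<Sum>i\<in>UNIV. \<Sum>k\<in>UNIV. cnj (z$i) * P$i$k * axis j c $ k)
      = (\<Sum>i\<in>UNIV. c * (cnj (z$i) * P$i$j))"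
  proof (intro sum.cong refl)
    fix i
    have "(\<Sum>k\<in>UNIV. cnj (z$i) * P$i$k * axis j c $ k) = (\<Sum>k\<in>UNIV. if k = j then c * (cnj (z$i) * P$i$j) else 0)"
      by (intro sum.cong refl) (auto simp: axis_def)
    then show "(\<Sum>k\<in>UNIV. cnj (z$i) * P$i$k * axis j c $ k) = c * (cnj (z$i) * P$i$j)" by simp
  qed
  also have "\<dots> = c * (\<Sum>i\<in>UNIV. cnj (z$i) * P$i$j)" by (simp add: sum_distrib_left)
  finally show ?thesis .
qed

lemma Dv_axis: "Dv P a b (axis j c) z =
   (of_nat (a j) * c * cmono (a(j := a j - 1)) b z + of_nat (b j) * cnj c * cmono a (b(j := b j - 1)) z) * rho P z
   - (cnj c * (P *v z)$j + c * (\<Sum>i\<in>UNIV. cnj (z$i) * P$i$j)) * cmono a b z * rho P z"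
proof -
  have "(\<Sum>i\<in>UNIV. of_nat (a i) * axis j c $ i * cmono (a(i := a i - 1)) b z
        + of_nat (b i) * cnj (axis j c $ i) * cmono a (b(i := b i - 1)) z)
     = (\<Sum>i\<in>UNIV. if i = j then of_nat (a j) * c * cmono (a(j := a j - 1)) b z + of_nat (b j) * cnj c * cmono a (b(j := b j - 1)) z else 0)"
    by (intro sum.cong refl) (auto simp: axis_def)
  then show ?thesis unfolding Dv_def ell_axis by simp
qed

lemma Dv_e: "Dv P a b (axis j 1) z =
   (of_nat (a j) * cmono (a(j := a j - 1)) b z + of_nat (b j) * cmono a (b(j := b j - 1)) z) * rho P z
   - ((P *v z)$j + (\<Sum>i\<in>UNIV. cnj (z$i) * P$i$j)) * cmono a b z * rho P z"
  unfolding Dv_axis by simp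

lemma Dv_i: "Dv P a b (axis j \<i>) z =
   (\<i> * of_nat (a j) * cmono (a(j := a j - 1)) b z - \<i> * of_nat (b j) * cmono a (b(j := b j - 1)) z) * rho P z
   - (- \<i> * (P *v z)$j + \<i> * (\<Sum>i\<in>UNIV. cnj (z$i) * P$i$j)) * cmono a b z * rho P z"
  unfolding Dv_axis by (simp add: algebra_simps)

context
  fixes P :: "complex^'n^'n" and l :: real
  assumes l: "l > 0" and hyp: "\<And>z. l * (norm z)\<^sup>2 \<le> Re (herm_form P z)"
begin

lemma IA:
  shows "integrable lborel (\<lambda>z. (P *v z)$j * cmono a b z * rho P z)"
    and "(LINT z|lborel. (P *v z)$j * cmono a b z * rho P z) = of_nat (b j) * Em P a (b(j := b j - 1))"
proof -
  let ?M2 = "\<lambda>z. cmono a (b(j := b j - 1)) z * rho P z"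
  have eq: "(\<lambda>z. (P *v z)$j * cmono a b z * rho P z) =
     (\<lambda>z. of_nat (b j) * ?M2 z - (Dv P a b (axis j 1) z + \<i> * Dv P a b (axis j \<i>) z) / 2)"
    apply (rule ext)
    apply (simp add: Dv_e Dv_i algebra_simps)
    apply (simp add: field_simps)
    done
  have i1: "integrable lborel ?M2" by (rule F_integrable[OF l hyp])
  have i2: "integrable lborel (Dv P a b v)" for v by (rule Dv_integrable[OF l hyp])
  show "integrable lborel (\<lambda>z. (P *v z)$j * cmono a b z * rho P z)"
    unfolding eq using i1 i2 by auto
  show "(LINT z|lborel. (P *v z)$j * cmono a b z * rho P z) = of_nat (b j) * Em P a (b(j := b j - 1))"
    unfolding eq using i1 i2 by (simp add: Em_def ibp[OF l hyp])
qed

lemma IB: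
  shows "integrable lborel (\<lambda>z. (\<Sum>i\<in>UNIV. cnj (z$i) * P$i$j) * cmono a b z * rho P z)"
    and "(LINT z|lborel. (\<Sum>i\<in>UNIV. cnj (z$i) * P$i$j) * cmono a b z * rho P z) = of_nat (a j) * Em P (a(j := a j - 1)) b"
proof -
  let ?M1 = "\<lambda>z. cmono (a(j := a j - 1)) b z * rho P z"
  have eq: "(\<lambda>z. (\<Sum>i\<in>UNIV. cnj (z$i) * P$i$j) * cmono a b z * rho P z) =
     (\<lambda>z. of_nat (a j) * ?M1 z - (Dv P a b (axis j 1) z - \<i> * Dv P a b (axis j \<i>) z) / 2)"
    apply (rule ext)
    apply (simp add: Dv_e Dv_i algebra_simps)
    apply (simp add: field_simps)
    done
  have i1: "integrable lborel ?M1" by (rule F_integrable[OF l hyp])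
  have i2: "integrable lborel (Dv P a b v)" for v by (rule Dv_integrable[OF l hyp])
  show "integrable lborel (\<lambda>z. (\<Sum>i\<in>UNIV. cnj (z$i) * P$i$j) * cmono a b z * rho P z)"
    unfolding eq using i1 i2 by auto
  show "(LINT z|lborel. (\<Sum>i\<in>UNIV. cnj (z$i) * P$i$j) * cmono a b z * rho P z) = of_nat (a j) * Em P (a(j := a j - 1)) b"
    unfolding eq using i1 i2 by (simp add: Em_def ibp[OF l hyp])
qed

end




lemma mono_suc_a: "cmono (a(h := Suc (a h))) b z = z$h * cmono a b z"
proof -
  have "cmono a b z = (z$h ^ a h * cnj (z$h) ^ b h) * (\<Prod>j\<in>UNIV-{h}. z$j ^ a j * cnj (z$j) ^ b j)"
    unfolding cmono_def by (subst prod.remove[of UNIV h]) auto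
  then show ?thesis unfolding mono_upd_a by simp
qed

lemma mono_suc_b: "cmono a (b(k := Suc (b k))) z = cnj (z$k) * cmono a b z"
proof -
  have "cmono a b z = (z$k ^ a k * cnj (z$k) ^ b k) * (\<Prod>j\<in>UNIV-{k}. z$j ^ a j * cnj (z$j) ^ b j)"
    unfolding cmono_def by (subst prod.remove[of UNIV k]) auto
  then show ?thesis unfolding mono_upd_b by simp
qed

lemma R12:
  fixes S :: "complex^'n^'n"
  assumes pd: "herm_pos_def S"
  shows "Em (matrix_inv S) (a(h := Suc (a h))) b = (\<Sum>j\<in>UNIV. S$h$j * of_nat (b j) * Em (matrix_inv S) a (b(j := b j - 1)))"
    and "Em (matrix_inv S) a (b(k := Suc (b k))) = (\<Sum>j\<in>UNIV. S$j$k * of_nat (a j) * Em (matrix_inv S) (a(j := a j - 1)) b)"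
proof -
  let ?P = "matrix_inv S"
  obtain l where l: "l > 0" and hyp: "\<And>z. l * (norm z)\<^sup>2 \<le> Re (herm_form ?P z)"
    using pd_facts(3)[OF pd] by blast
  have SP: "S ** ?P = mat 1" and PS: "?P ** S = mat 1" using pd_facts[OF pd] by auto
  have zh: "z$h = (\<Sum>j\<in>UNIV. S$h$j * (?P *v z)$j)" for z
  proof -
    have "S *v (?P *v z) = z" by (simp add: matrix_vector_mul_assoc SP)
    then have "(S *v (?P *v z))$h = z$h" by simp
    then show ?thesis by (simp add: matrix_vector_mult_def)
  qed
  have zk: "cnj (z$k) = (\<Sum>j\<in>UNIV. (\<Sum>i\<in>UNIV. cnj (z$i) * ?P$i$j) * S$j$k)" for z
  proof -
    have "(\<Sum>j\<in>UNIV. (\<Sum>i\<in>UNIV. cnj (z$i) * ?P$i$j) * S$j$k) = (\<Sum>j\<in>UNIV. \<Sum>i\<in>UNIV. cnj (z$i) * ?P$i$j * S$j$k)"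
      by (simp only: sum_distrib_right)
    also have "\<dots> = (\<Sum>i\<in>UNIV. \<Sum>j\<in>UNIV. cnj (z$i) * ?P$i$j * S$j$k)"
      by (rule sum.swap)
    also have "\<dots> = (\<Sum>i\<in>UNIV. cnj (z$i) * (?P ** S)$i$k)"
      by (simp only: matrix_matrix_mult_def vec_lambda_beta sum_distrib_left mult.assoc)
    also have "\<dots> = (\<Sum>i\<in>UNIV. if i = k then cnj (z$k) else 0)"
      unfolding PS by (intro sum.cong refl) (auto simp: mat_def)
    finally show ?thesis by simp
  qed
  show "Em ?P (a(h := Suc (a h))) b = (\<Sum>j\<in>UNIV. S$h$j * of_nat (b j) * Em ?P a (b(j := b j - 1)))"
  proof -
    have "Em ?P (a(h := Suc (a h))) b = (LINT z|lborel. (\<Sum>j\<in>UNIV. S$h$j * ((?P *v z)$j * cmono a b z * rho ?P z)))"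
      unfolding Em_def mono_suc_a
    proof (intro Bochner_Integration.integral_cong refl)
      fix z
      show "z$h * cmono a b z * rho ?P z = (\<Sum>j\<in>UNIV. S$h$j * ((?P *v z)$j * cmono a b z * rho ?P z))"
        by (subst zh[of z]) (simp only: sum_distrib_right mult.assoc)
    qed
    also have "\<dots> = (\<Sum>j\<in>UNIV. S$h$j * (LINT z|lborel. (?P *v z)$j * cmono a b z * rho ?P z))"
      using IA(1)[OF l hyp] by (simp add: integral_sum)
    also have "\<dots> = (\<Sum>j\<in>UNIV. S$h$j * of_nat (b j) * Em ?P a (b(j := b j - 1)))"
      unfolding IA(2)[OF l hyp] by (simp add: mult.assoc)
    finally show ?thesis .
  qed
  show "Em ?P a (b(k := Suc (b k))) = (\<Sum>j\<in>UNIV. S$j$k * of_nat (a j) * Em ?P (a(j := a j - 1)) b)"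
  proof -
    have "Em ?P a (b(k := Suc (b k))) = (LINT z|lborel. (\<Sum>j\<in>UNIV. S$j$k * ((\<Sum>i\<in>UNIV. cnj (z$i) * ?P$i$j) * cmono a b z * rho ?P z)))"
      unfolding Em_def mono_suc_b
    proof (intro Bochner_Integration.integral_cong refl)
      fix z
      show "cnj (z$k) * cmono a b z * rho ?P z = (\<Sum>j\<in>UNIV. S$j$k * ((\<Sum>i\<in>UNIV. cnj (z$i) * ?P$i$j) * cmono a b z * rho ?P z))"
        by (subst zk[of z]) (simp add: sum_distrib_right sum_distrib_left mult_ac)
    qed
    also have "\<dots> = (\<Sum>j\<in>UNIV. S$j$k * (LINT z|lborel. (\<Sum>i\<in>UNIV. cnj (z$i) * ?P$i$j) * cmono a b z * rho ?P z))"
      using IB(1)[OF l hyp] by (simp add: integral_sum)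
    also have "\<dots> = (\<Sum>j\<in>UNIV. S$j$k * of_nat (a j) * Em ?P (a(j := a j - 1)) b)"
      unfolding IB(2)[OF l hyp] by (simp add: mult.assoc)
    finally show ?thesis .
  qed
qed

theorem theorem3p11:
  fixes S :: "complex^'n^'n" and nn mm :: "'n \<Rightarrow> nat"
  assumes "herm_pos_def S"
  assumes "(\<exists>h \<in> Nset nn. SN S mm h = {}) \<or> (\<exists>k \<in> Mset mm. SM S nn k = {})
           \<or> ((\<forall>h \<in> Nset nn. SN S mm h \<noteq> {}) \<and>
              (\<exists>Mr \<in> M_blocks S nn mm.
                 (\<Sum>i \<in> {i \<in> Nset nn. SN S mm i \<subseteq> Mr}. nn i) \<noteq> (\<Sum>j \<in> Mr. mm j)))"
  shows "cgauss_moment S nn mm = 0"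
proof -
  have nf: "\<not> feasible S nn mm" by (rule cond_not_feasible[OF assms(2)])
  have E0: "Em (matrix_inv S) nn mm = 0"
    by (rule comb_zero[where E = "Em (matrix_inv S)", OF R12(1)[OF assms(1)] R12(2)[OF assms(1)] nf])
  have "cgauss_moment S nn mm = (LINT z|lborel. (cmono nn mm z * rho (matrix_inv S) z) / (complex_of_real (pi ^ CARD('n)) * det S))"
    unfolding cgauss_moment_def cgauss_density_def cmono_def rho_def by simp
  also have "\<dots> = Em (matrix_inv S) nn mm / (complex_of_real (pi ^ CARD('n)) * det S)"
    unfolding Em_def by (rule integral_divide_zero)
  finally show ?thesis using E0 by simp
qed


end
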